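(* Consider a system of $M$ conservation laws with state space $\mathcal D\subset\mathbb R^M$, entropy variables $\mathbf v=(v^1,\dots,v^M)$, entropy flux potential $\Psi$, and an entropy conservative two-point flux $\mathbf f^{\mathrm{EC}}$, i.e. $(\mathbf v(\mathbf u_R)-\mathbf v(\mathbf u_L))^T\mathbf f^{\mathrm{EC}}(\mathbf u_L,\mathbf u_R)=\Psi(\mathbf u_R)-\Psi(\mathbf u_L)$ for all $\mathbf u_L,\mathbf u_R\in\mathcal D$. Let an element $R$ with $N_R+1$ interface nodes, diagonal positive weight matrix $\mathbf M_R$ and edge length $\Delta_R>0$ share its edge with $E\ge1$ elements $L_1,\dots,L_E$ ($L_i$ with $N_{L_i}+1$ interface nodes, diagonal positive weight matrix $\mathbf M_{L_i}$, edge length $\Delta_{L_i}>0$, $\sum_i\Delta_{L_i}=\Delta_R$), and let $\mathbf P_{L_i2R}\in\mathbb R^{(N_R+1)\times(N_{L_i}+1)}$, $\mathbf P_{R2L_i}\in\mathbb R^{(N_{L_i}+1)\times(N_R+1)}$ satisfy $$\Delta_{L_i}\mathbf P_{R2L_i}^T\mathbf M_{L_i}=\Delta_R\mathbf M_R\mathbf P_{L_i2R},\qquad \mathbf P_{R2L_i}\mathbf 1^R=\mathbf 1^{L_i}\quad(i=1,\dots,E),\qquad \sum_{i=1}^E\mathbf P_{L_i2R}\mathbf 1^{L_i}=\mathbf 1^R.$$ For arbitrary states $\mathbf U^{L_i}_k,\mathbf U^R_j\in\mathcal D$ let $[\mathbf F^q_{L_i,R}]_{kj}=f^{\mathrm{EC},q}(\mathbf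 U^{L_i}_k,\mathbf U^R_j)$, $\mathbf F^{\mathrm{EC},q,R}=\sum_{i=1}^E\mathbb E(\mathbf P_{L_i2R}\mathbf F^q_{L_i,R})$, $\mathbf F^{\mathrm{EC},q,L_i}=\mathbb E(\mathbf P_{R2L_i}(\mathbf F^q_{L_i,R})^T)$, $V^{q,L_i}_k=v^q(\mathbf U^{L_i}_k)$, $V^{q,R}_j=v^q(\mathbf U^R_j)$, $\Psi^{L_i}_k=\Psi(\mathbf U^{L_i}_k)$, $\Psi^R_j=\Psi(\mathbf U^R_j)$. For a scalar $\lambda>0$ define the numerical surface fluxes $$\mathbf F^{\mathrm{ES},q,L_i}=\mathbf F^{\mathrm{EC},q,L_i}-\frac{\lambda}{2}\big(\mathbf P_{R2L_i}\mathbf V^{q,R}-\mathbf V^{q,L_i}\big),\qquad \mathbf F^{\mathrm{ES},q,R}=\mathbf F^{\mathrm{EC},q,R}-\frac{\lambda}{2}\sum_{i=1}^E\mathbf P_{L_i2R}\big(\mathbf P_{R2L_i}\mathbf V^{q,R}-\mathbf V^{q,L_i}\big).$$ Then the scheme is primary conservative and entropy stable at this interface: for every $q=1,\dots,M$, $$\Delta U^q:=\Delta_R(\mathbf 1^R)^T\mathbf M_R\mathbf F^{\mathrm{ES},q,R}-\sum_{i=1}^E\Delta_{L_i}(\mathbf 1^{L_i})^T\mathbf M_{L_i}\mathbf F^{\mathrm{ES},q,L_i}=0,$$ and $$\Delta S:=\Delta_R\Big(\sum_{q=1}^M(\mathbf V^{q,R})^T\mathbf M_R\mathbf F^{\mathrm{ES},q,R}-(\mathbf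 1^R)^T\mathbf M_R\boldsymbol\Psi^R\Big)-\sum_{i=1}^E\Delta_{L_i}\Big(\sum_{q=1}^M(\mathbf V^{q,L_i})^T\mathbf M_{L_i}\mathbf F^{\mathrm{ES},q,L_i}-(\mathbf 1^{L_i})^T\mathbf M_{L_i}\boldsymbol\Psi^{L_i}\Big)\le0.$$
   Context: Setting: a nodal discontinuous Galerkin spectral element method on Legendre–Gauss–Lobatto nodes (summation-by-parts operators) on a rectangular $h/p$ non-conforming mesh; a hyperbolic system with strongly convex entropy $S$, entropy variables $\mathbf v=\partial S/\partial\mathbf u$, entropy flux $F$, and entropy flux potential $\Psi=\mathbf v\cdot\mathbf f-F$ with $\mathbf f$ the interface-normal flux. One element $R$ is adjacent across one edge to $E$ elements $L_1,\dots,L_E$ stacked along that edge ($E=1$ covers the case of a conforming edge with differing polynomial degrees). $\Delta U^q$ and $\Delta S$ are (up to a common positive factor) the contributions of this interface to the time rate of change of the total integral of the $q$-th conserved variable and of the total entropy when entropy conservative volume fluxes are used; "primary conservative" means $\Delta U^q=0$ and "entropy stable" means $\Delta S\le 0$. Notation: $\mathbb E(\mathbf W)$ is the vector of diagonal entries of a square matrix $\mathbf W$; $\mathbf 1^R,\mathbf 1^{L_i}$ are all-ones vectors; $\mathbf V^{q,R},\mathbf V^{q,L_i},\boldsymbol\Psi^R,\boldsymbol\Psi^{L_i}$ are the vectors with the indicated entries. *)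

theory Defs
  imports Complex_Main
begin

text \<open>Index conventions: conserved variables q < M; elements L_i with i < E;
 nodes of R are j \<in> {..NR}, nodes of L_i are k \<in> {..N i}.
 Matrices are functions of indices: PL2R i j k = [P_{L_i2R}]_{jk},
 PR2L i k j = [P_{R2L_i}]_{kj}; diagonal weight matrices by their diagonals wR, w i.
 States are u :: nat \<Rightarrow> real (components q < M).
 fEC uL uR q = q-th component of the two-point flux, v u q = v^q(u).\<close>

type_synonym state = "nat \<Rightarrow> real"

definition FECR ::
  "(state \<Rightarrow> state \<Rightarrow> nat \<Rightarrow> real) \<Rightarrow> nat \<Rightarrow> (nat \<Rightarrow> nat)
   \<Rightarrow> (nat \<Rightarrow> nat \<Rightarrow> nat \<Rightarrow> real) \<Rightarrow> (nat \<Rightarrow> nat \<Rightarrow> state) \<Rightarrow> (nat \<Rightarrow> state)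
   \<Rightarrow> nat \<Rightarrow> nat \<Rightarrow> real" where
  "FECR fEC E N PL2R UL UR q j =
     (\<Sum>i<E. \<Sum>k\<le>N i. PL2R i j k * fEC (UL i k) (UR j) q)"

definition FECL ::
  "(state \<Rightarrow> state \<Rightarrow> nat \<Rightarrow> real) \<Rightarrow> nat
   \<Rightarrow> (nat \<Rightarrow> nat \<Rightarrow> nat \<Rightarrow> real) \<Rightarrow> (nat \<Rightarrow> nat \<Rightarrow> state) \<Rightarrow> (nat \<Rightarrow> state)
   \<Rightarrow> nat \<Rightarrow> nat \<Rightarrow> nat \<Rightarrow> real" where
  "FECL fEC NR PR2L UL UR q i k =
     (\<Sum>j\<le>NR. PR2L i k j * fEC (UL i k) (UR j) q)"

definition jumpL ::
  "(state \<Rightarrow> nat \<Rightarrow> real) \<Rightarrow> nat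
   \<Rightarrow> (nat \<Rightarrow> nat \<Rightarrow> nat \<Rightarrow> real) \<Rightarrow> (nat \<Rightarrow> nat \<Rightarrow> state) \<Rightarrow> (nat \<Rightarrow> state)
   \<Rightarrow> nat \<Rightarrow> nat \<Rightarrow> nat \<Rightarrow> real" where
  "jumpL v NR PR2L UL UR q i k =
     (\<Sum>j\<le>NR. PR2L i k j * v (UR j) q) - v (UL i k) q"

definition FESL ::
  "(state \<Rightarrow> state \<Rightarrow> nat \<Rightarrow> real) \<Rightarrow> (state \<Rightarrow> nat \<Rightarrow> real) \<Rightarrow> real \<Rightarrow> nat
   \<Rightarrow> (nat \<Rightarrow> nat \<Rightarrow> nat \<Rightarrow> real) \<Rightarrow> (nat \<Rightarrow> nat \<Rightarrow> state) \<Rightarrow> (nat \<Rightarrow> state)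
   \<Rightarrow> nat \<Rightarrow> nat \<Rightarrow> nat \<Rightarrow> real" where
  "FESL fEC v lam NR PR2L UL UR q i k =
     FECL fEC NR PR2L UL UR q i k - lam / 2 * jumpL v NR PR2L UL UR q i k"

definition FESR ::
  "(state \<Rightarrow> state \<Rightarrow> nat \<Rightarrow> real) \<Rightarrow> (state \<Rightarrow> nat \<Rightarrow> real) \<Rightarrow> real \<Rightarrow> nat \<Rightarrow> nat
   \<Rightarrow> (nat \<Rightarrow> nat) \<Rightarrow> (nat \<Rightarrow> nat \<Rightarrow> nat \<Rightarrow> real) \<Rightarrow> (nat \<Rightarrow> nat \<Rightarrow> nat \<Rightarrow> real)
   \<Rightarrow> (nat \<Rightarrow> nat \<Rightarrow> state) \<Rightarrow> (nat \<Rightarrow> state) \<Rightarrow> nat \<Rightarrow> nat \<Rightarrow> real" where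
  "FESR fEC v lam NR E N PL2R PR2L UL UR q j =
     FECR fEC E N PL2R UL UR q j
     - lam / 2 * (\<Sum>i<E. \<Sum>k\<le>N i. PL2R i j k * jumpL v NR PR2L UL UR q i k)"

definition DeltaU ::
  "(state \<Rightarrow> state \<Rightarrow> nat \<Rightarrow> real) \<Rightarrow> (state \<Rightarrow> nat \<Rightarrow> real) \<Rightarrow> real
   \<Rightarrow> nat \<Rightarrow> (nat \<Rightarrow> real) \<Rightarrow> real
   \<Rightarrow> nat \<Rightarrow> (nat \<Rightarrow> nat) \<Rightarrow> (nat \<Rightarrow> nat \<Rightarrow> real) \<Rightarrow> (nat \<Rightarrow> real)
   \<Rightarrow> (nat \<Rightarrow> nat \<Rightarrow> nat \<Rightarrow> real) \<Rightarrow> (nat \<Rightarrow> nat \<Rightarrow> nat \<Rightarrow> real)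
   \<Rightarrow> (nat \<Rightarrow> nat \<Rightarrow> state) \<Rightarrow> (nat \<Rightarrow> state) \<Rightarrow> nat \<Rightarrow> real" where
  "DeltaU fEC v lam NR wR DR E N w D PL2R PR2L UL UR q =
     DR * (\<Sum>j\<le>NR. wR j * FESR fEC v lam NR E N PL2R PR2L UL UR q j)
     - (\<Sum>i<E. D i * (\<Sum>k\<le>N i. w i k * FESL fEC v lam NR PR2L UL UR q i k))"

definition DeltaS ::
  "nat \<Rightarrow> (state \<Rightarrow> state \<Rightarrow> nat \<Rightarrow> real) \<Rightarrow> (state \<Rightarrow> nat \<Rightarrow> real) \<Rightarrow> (state \<Rightarrow> real)
   \<Rightarrow> real \<Rightarrow> nat \<Rightarrow> (nat \<Rightarrow> real) \<Rightarrow> real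
   \<Rightarrow> nat \<Rightarrow> (nat \<Rightarrow> nat) \<Rightarrow> (nat \<Rightarrow> nat \<Rightarrow> real) \<Rightarrow> (nat \<Rightarrow> real)
   \<Rightarrow> (nat \<Rightarrow> nat \<Rightarrow> nat \<Rightarrow> real) \<Rightarrow> (nat \<Rightarrow> nat \<Rightarrow> nat \<Rightarrow> real)
   \<Rightarrow> (nat \<Rightarrow> nat \<Rightarrow> state) \<Rightarrow> (nat \<Rightarrow> state) \<Rightarrow> real" where
  "DeltaS M fEC v Psi lam NR wR DR E N w D PL2R PR2L UL UR =
     DR * ((\<Sum>q<M. \<Sum>j\<le>NR. v (UR j) q * wR j * FESR fEC v lam NR E N PL2R PR2L UL UR q j)
           - (\<Sum>j\<le>NR. wR j * Psi (UR j)))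
     - (\<Sum>i<E. D i * ((\<Sum>q<M. \<Sum>k\<le>N i. v (UL i k) q * w i k * FESL fEC v lam NR PR2L UL UR q i k)
                       - (\<Sum>k\<le>N i. w i k * Psi (UL i k))))"

end

theory Submission
  imports Defs
begin

theorem theorem2:
  fixes M NR E :: nat
    and Dom :: "state set"
    and v :: "state \<Rightarrow> nat \<Rightarrow> real"
    and Psi :: "state \<Rightarrow> real"
    and fEC :: "state \<Rightarrow> state \<Rightarrow> nat \<Rightarrow> real"
    and wR :: "nat \<Rightarrow> real" and DR :: real
    and N :: "nat \<Rightarrow> nat" and w :: "nat \<Rightarrow> nat \<Rightarrow> real" and D :: "nat \<Rightarrow> real"
    and PL2R PR2L :: "nat \<Rightarrow> nat \<Rightarrow> nat \<Rightarrow> real"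
    and UL :: "nat \<Rightarrow> nat \<Rightarrow> state" and UR :: "nat \<Rightarrow> state"
    and lam :: real
  assumes Dom_sub: "Dom \<subseteq> {u. \<forall>q\<ge>M. u q = 0}"
    and EC: "\<And>uL uR. uL \<in> Dom \<Longrightarrow> uR \<in> Dom \<Longrightarrow>
               (\<Sum>q<M. (v uR q - v uL q) * fEC uL uR q) = Psi uR - Psi uL"
    and wR_pos: "\<And>j. j \<le> NR \<Longrightarrow> wR j > 0"
    and DR_pos: "DR > 0"
    and E_ge1: "E \<ge> 1"
    and w_pos: "\<And>i k. i < E \<Longrightarrow> k \<le> N i \<Longrightarrow> w i k > 0"
    and D_pos: "\<And>i. i < E \<Longrightarrow> D i > 0"
    and D_sum: "(\<Sum>i<E. D i) = DR"
    and SBP: "\<And>i j k. i < E \<Longrightarrow> j \<le> NR \<Longrightarrow> k \<le> N i \<Longrightarrow>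
               D i * (PR2L i k j * w i k) = DR * (wR j * PL2R i j k)"
    and R2L_one: "\<And>i k. i < E \<Longrightarrow> k \<le> N i \<Longrightarrow> (\<Sum>j\<le>NR. PR2L i k j) = 1"
    and L2R_one: "\<And>j. j \<le> NR \<Longrightarrow> (\<Sum>i<E. \<Sum>k\<le>N i. PL2R i j k) = 1"
    and UL_in: "\<And>i k. i < E \<Longrightarrow> k \<le> N i \<Longrightarrow> UL i k \<in> Dom"
    and UR_in: "\<And>j. j \<le> NR \<Longrightarrow> UR j \<in> Dom"
    and lam_pos: "lam > 0"
  shows "(\<forall>q<M. DeltaU fEC v lam NR wR DR E N w D PL2R PR2L UL UR q = 0)
         \<and> DeltaS M fEC v Psi lam NR wR DR E N w D PL2R PR2L UL UR \<le> 0"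
proof -
  define a where "a i j k = D i * w i k * PR2L i k j" for i j k
  define G where "G q i k j = fEC (UL i k) (UR j) q - lam / 2 * jumpL v NR PR2L UL UR q i k" for q i k j
  define J where "J q i k = jumpL v NR PR2L UL UR q i k" for q i k
  have aR: "DR * wR j * PL2R i j k = a i j k" if "i < E" "j \<le> NR" "k \<le> N i" for i j k
    using SBP[OF that] unfolding a_def by (simp add: algebra_simps)
  have aL: "(\<Sum>j\<le>NR. a i j k) = D i * w i k" if "i < E" "k \<le> N i" for i k
    unfolding a_def using R2L_one[OF that] by (simp add: sum_distrib_left[symmetric])
  have aLv: "(\<Sum>j\<le>NR. a i j k * (v (UR j) q - v (UL i k) q)) = D i * w i k * J q i k"
    if "i < E" "k \<le> N i" for i k q
  proof -
    have "(\<Sum>j\<le>NR. a i j k * (v (UR j) q - v (UL i k) q))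
       = D i * w i k * ((\<Sum>j\<le>NR. PR2L i k j * v (UR j) q) - (\<Sum>j\<le>NR. PR2L i k j) * v (UL i k) q)"
      unfolding a_def by (simp add: algebra_simps sum_distrib_left sum_distrib_right sum_subtractf)
    then show ?thesis using R2L_one[OF that] by (simp add: J_def jumpL_def)
  qed
  have R1: "FESR fEC v lam NR E N PL2R PR2L UL UR q j = (\<Sum>i<E. \<Sum>k\<le>N i. PL2R i j k * G q i k j)" for q j
    by (simp add: FESR_def FECR_def G_def right_diff_distrib sum_subtractf sum_distrib_left algebra_simps)
  have L1: "FESL fEC v lam NR PR2L UL UR q i k = (\<Sum>j\<le>NR. PR2L i k j * G q i k j)"
    if "i < E" "k \<le> N i" for q i k
  proof -
    have "(\<Sum>j\<le>NR. PR2L i k j * G q i k j) = (\<Sum>j\<le>NR. PR2L i k j * fEC (UL i k) (UR j) q)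
        - (\<Sum>j\<le>NR. PR2L i k j) * (lam / 2 * jumpL v NR PR2L UL UR q i k)"
      by (simp add: G_def right_diff_distrib sum_subtractf sum_distrib_right)
    then show ?thesis using R2L_one[OF that] by (simp add: FESL_def FECL_def)
  qed
  have swapA: "(\<Sum>j\<in>A. \<Sum>i<E. \<Sum>k\<le>N i. h i j k) = (\<Sum>i<E. \<Sum>k\<le>N i. \<Sum>j\<in>A. h i j k)"
    for h :: "nat \<Rightarrow> nat \<Rightarrow> nat \<Rightarrow> real" and A
  proof -
    have "(\<Sum>j\<in>A. \<Sum>i<E. \<Sum>k\<le>N i. h i j k) = (\<Sum>i<E. \<Sum>j\<in>A. \<Sum>k\<le>N i. h i j k)"
      by (rule sum.swap)
    also have "\<dots> = (\<Sum>i<E. \<Sum>k\<le>N i. \<Sum>j\<in>A. h i j k)"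
      by (rule sum.cong[OF refl], rule sum.swap)
    finally show ?thesis .
  qed
  have swap: "(\<Sum>j\<le>NR. \<Sum>i<E. \<Sum>k\<le>N i. h i j k) = (\<Sum>i<E. \<Sum>k\<le>N i. \<Sum>j\<le>NR. h i j k)"
    for h :: "nat \<Rightarrow> nat \<Rightarrow> nat \<Rightarrow> real" by (rule swapA)
  show ?thesis
  proof
    show "\<forall>q<M. DeltaU fEC v lam NR wR DR E N w D PL2R PR2L UL UR q = 0"
    proof (intro allI impI)
      fix q assume "q < M"
      have A: "DR * (\<Sum>j\<le>NR. wR j * FESR fEC v lam NR E N PL2R PR2L UL UR q j)
          = (\<Sum>i<E. \<Sum>k\<le>N i. \<Sum>j\<le>NR. a i j k * G q i k j)"
      proof -
        have "DR * (\<Sum>j\<le>NR. wR j * FESR fEC v lam NR E N PL2R PR2L UL UR q j)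
            = (\<Sum>j\<le>NR. \<Sum>i<E. \<Sum>k\<le>N i. DR * wR j * PL2R i j k * G q i k j)"
          by (simp add: R1 sum_distrib_left mult.assoc)
        also have "\<dots> = (\<Sum>j\<le>NR. \<Sum>i<E. \<Sum>k\<le>N i. a i j k * G q i k j)"
          by (intro sum.cong refl) (simp add: aR)
        finally show ?thesis by (simp add: swap)
      qed
      have B: "(\<Sum>i<E. D i * (\<Sum>k\<le>N i. w i k * FESL fEC v lam NR PR2L UL UR q i k))
          = (\<Sum>i<E. \<Sum>k\<le>N i. \<Sum>j\<le>NR. a i j k * G q i k j)"
        by (intro sum.cong refl) (simp add: sum_distrib_left L1 a_def mult.assoc)
      show "DeltaU fEC v lam NR wR DR E N w D PL2R PR2L UL UR q = 0"
        unfolding DeltaU_def using A B by simp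
    qed
  next
    show "DeltaS M fEC v Psi lam NR wR DR E N w D PL2R PR2L UL UR \<le> 0"
    proof -
      define Y where "Y i k j = (\<Sum>q<M. v (UR j) q * G q i k j) - Psi (UR j)" for i k j
      define Z where "Z i k j = (\<Sum>q<M. v (UL i k) q * G q i k j) - Psi (UL i k)" for i k j
      have Rj: "DR * wR j * ((\<Sum>q<M. v (UR j) q * FESR fEC v lam NR E N PL2R PR2L UL UR q j) - Psi (UR j))
          = (\<Sum>i<E. \<Sum>k\<le>N i. a i j k * Y i k j)" if "j \<le> NR" for j
      proof -
        have "(\<Sum>i<E. \<Sum>k\<le>N i. a i j k * Y i k j) = (\<Sum>i<E. \<Sum>k\<le>N i. DR * wR j * (PL2R i j k * Y i k j))"
          by (intro sum.cong refl) (simp add: aR[symmetric] that)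
        also have "\<dots> = DR * wR j * (\<Sum>i<E. \<Sum>k\<le>N i. PL2R i j k * Y i k j)"
          by (simp add: sum_distrib_left)
        also have "(\<Sum>i<E. \<Sum>k\<le>N i. PL2R i j k * Y i k j)
            = (\<Sum>i<E. \<Sum>k\<le>N i. \<Sum>q<M. PL2R i j k * (v (UR j) q * G q i k j))
              - (\<Sum>i<E. \<Sum>k\<le>N i. PL2R i j k) * Psi (UR j)"
          by (simp add: Y_def right_diff_distrib sum_subtractf sum_distrib_left sum_distrib_right)
        also have "(\<Sum>i<E. \<Sum>k\<le>N i. \<Sum>q<M. PL2R i j k * (v (UR j) q * G q i k j))
            = (\<Sum>q<M. \<Sum>i<E. \<Sum>k\<le>N i. PL2R i j k * (v (UR j) q * G q i k j))"
          by (rule swapA[symmetric])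
        also have "\<dots> = (\<Sum>q<M. v (UR j) q * FESR fEC v lam NR E N PL2R PR2L UL UR q j)"
          by (simp add: R1 sum_distrib_left algebra_simps)
        finally show ?thesis using L2R_one[OF that] by simp
      qed
      have Lik: "D i * w i k * ((\<Sum>q<M. v (UL i k) q * FESL fEC v lam NR PR2L UL UR q i k) - Psi (UL i k))
          = (\<Sum>j\<le>NR. a i j k * Z i k j)" if "i < E" "k \<le> N i" for i k
      proof -
        have "(\<Sum>j\<le>NR. a i j k * Z i k j) = D i * w i k * (\<Sum>j\<le>NR. PR2L i k j * Z i k j)"
          by (simp add: a_def sum_distrib_left algebra_simps)
        also have "(\<Sum>j\<le>NR. PR2L i k j * Z i k j)
            = (\<Sum>j\<le>NR. \<Sum>q<M. PR2L i k j * (v (UL i k) q * G q i k j))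
              - (\<Sum>j\<le>NR. PR2L i k j) * Psi (UL i k)"
          by (simp add: Z_def right_diff_distrib sum_subtractf sum_distrib_left sum_distrib_right)
        also have "(\<Sum>j\<le>NR. \<Sum>q<M. PR2L i k j * (v (UL i k) q * G q i k j))
            = (\<Sum>q<M. v (UL i k) q * FESL fEC v lam NR PR2L UL UR q i k)"
          by (subst sum.swap) (simp add: L1[OF that] sum_distrib_left algebra_simps)
        finally show ?thesis using R2L_one[OF that] by simp
      qed
      have diff: "a i j k * Y i k j - a i j k * Z i k j
          = - (lam / 2) * (\<Sum>q<M. J q i k * (a i j k * (v (UR j) q - v (UL i k) q)))"
        if "i < E" "k \<le> N i" "j \<le> NR" for i j k
      proof -
        have "Y i k j - Z i k j = (\<Sum>q<M. (v (UR j) q - v (UL i k) q) * fEC (UL i k) (UR j) q)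
            - (Psi (UR j) - Psi (UL i k))
            - lam / 2 * (\<Sum>q<M. (v (UR j) q - v (UL i k) q) * J q i k)"
          by (simp add: Y_def Z_def G_def J_def sum_subtractf sum_distrib_left algebra_simps)
        also have "\<dots> = - (lam / 2) * (\<Sum>q<M. (v (UR j) q - v (UL i k) q) * J q i k)"
          using EC[OF UL_in[OF that(1,2)] UR_in[OF that(3)]] by simp
        finally have YZ: "Y i k j - Z i k j = - (lam / 2) * (\<Sum>q<M. (v (UR j) q - v (UL i k) q) * J q i k)" .
        have "a i j k * Y i k j - a i j k * Z i k j = a i j k * (Y i k j - Z i k j)"
          by (simp add: right_diff_distrib)
        also have "\<dots> = - (lam / 2) * (a i j k * (\<Sum>q<M. (v (UR j) q - v (UL i k) q) * J q i k))"
          by (simp add: YZ)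
        also have "a i j k * (\<Sum>q<M. (v (UR j) q - v (UL i k) q) * J q i k)
            = (\<Sum>q<M. J q i k * (a i j k * (v (UR j) q - v (UL i k) q)))"
          by (simp add: sum_distrib_left mult_ac)
        finally show ?thesis .
      qed
      have RS: "DR * ((\<Sum>q<M. \<Sum>j\<le>NR. v (UR j) q * wR j * FESR fEC v lam NR E N PL2R PR2L UL UR q j)
           - (\<Sum>j\<le>NR. wR j * Psi (UR j))) = (\<Sum>i<E. \<Sum>k\<le>N i. \<Sum>j\<le>NR. a i j k * Y i k j)"
      proof -
        have "DR * ((\<Sum>q<M. \<Sum>j\<le>NR. v (UR j) q * wR j * FESR fEC v lam NR E N PL2R PR2L UL UR q j)
           - (\<Sum>j\<le>NR. wR j * Psi (UR j)))
           = (\<Sum>j\<le>NR. DR * wR j * ((\<Sum>q<M. v (UR j) q * FESR fEC v lam NR E N PL2R PR2L UL UR q j) - Psi (UR j)))"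
          by (subst sum.swap) (simp add: sum_distrib_left right_diff_distrib sum_subtractf algebra_simps)
        also have "\<dots> = (\<Sum>j\<le>NR. \<Sum>i<E. \<Sum>k\<le>N i. a i j k * Y i k j)"
          by (intro sum.cong refl) (simp add: Rj)
        finally show ?thesis by (simp add: swap)
      qed
      have LS: "(\<Sum>i<E. D i * ((\<Sum>q<M. \<Sum>k\<le>N i. v (UL i k) q * w i k * FESL fEC v lam NR PR2L UL UR q i k)
                       - (\<Sum>k\<le>N i. w i k * Psi (UL i k))))
          = (\<Sum>i<E. \<Sum>k\<le>N i. \<Sum>j\<le>NR. a i j k * Z i k j)"
      proof (intro sum.cong refl)
        fix i assume i: "i \<in> {..<E}"
        have "D i * ((\<Sum>q<M. \<Sum>k\<le>N i. v (UL i k) q * w i k * FESL fEC v lam NR PR2L UL UR q i k)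
                       - (\<Sum>k\<le>N i. w i k * Psi (UL i k)))
          = (\<Sum>k\<le>N i. D i * w i k * ((\<Sum>q<M. v (UL i k) q * FESL fEC v lam NR PR2L UL UR q i k) - Psi (UL i k)))"
          by (subst sum.swap) (simp add: sum_distrib_left right_diff_distrib sum_subtractf algebra_simps)
        also have "\<dots> = (\<Sum>k\<le>N i. \<Sum>j\<le>NR. a i j k * Z i k j)"
          using i by (intro sum.cong refl) (simp add: Lik)
        finally show "D i * ((\<Sum>q<M. \<Sum>k\<le>N i. v (UL i k) q * w i k * FESL fEC v lam NR PR2L UL UR q i k)
                       - (\<Sum>k\<le>N i. w i k * Psi (UL i k))) = (\<Sum>k\<le>N i. \<Sum>j\<le>NR. a i j k * Z i k j)" .
      qed
      have "DeltaS M fEC v Psi lam NR wR DR E N w D PL2R PR2L UL UR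
          = (\<Sum>i<E. \<Sum>k\<le>N i. \<Sum>j\<le>NR. a i j k * Y i k j - a i j k * Z i k j)"
        unfolding DeltaS_def RS LS by (simp add: sum_subtractf)
      also have "\<dots> = (\<Sum>i<E. \<Sum>k\<le>N i. \<Sum>j\<le>NR. - (lam / 2) * (\<Sum>q<M. J q i k * (a i j k * (v (UR j) q - v (UL i k) q))))"
        by (intro sum.cong refl) (simp add: diff)
      also have "\<dots> = (\<Sum>i<E. \<Sum>k\<le>N i. - (lam / 2) * (\<Sum>q<M. J q i k * (\<Sum>j\<le>NR. a i j k * (v (UR j) q - v (UL i k) q))))"
      proof (intro sum.cong refl)
        fix i k
        have "(\<Sum>j\<le>NR. - (lam / 2) * (\<Sum>q<M. J q i k * (a i j k * (v (UR j) q - v (UL i k) q))))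
            = - (lam / 2) * (\<Sum>j\<le>NR. \<Sum>q<M. J q i k * (a i j k * (v (UR j) q - v (UL i k) q)))"
          by (rule sum_distrib_left[symmetric])
        also have "(\<Sum>j\<le>NR. \<Sum>q<M. J q i k * (a i j k * (v (UR j) q - v (UL i k) q)))
            = (\<Sum>q<M. \<Sum>j\<le>NR. J q i k * (a i j k * (v (UR j) q - v (UL i k) q)))"
          by (rule sum.swap)
        also have "\<dots> = (\<Sum>q<M. J q i k * (\<Sum>j\<le>NR. a i j k * (v (UR j) q - v (UL i k) q)))"
          by (simp only: sum_distrib_left)
        finally show "(\<Sum>j\<le>NR. - (lam / 2) * (\<Sum>q<M. J q i k * (a i j k * (v (UR j) q - v (UL i k) q))))
            = - (lam / 2) * (\<Sum>q<M. J q i k * (\<Sum>j\<le>NR. a i j k * (v (UR j) q - v (UL i k) q)))" .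
      qed
      also have "\<dots> = (\<Sum>i<E. \<Sum>k\<le>N i. - (lam / 2) * (D i * w i k * (\<Sum>q<M. (J q i k)\<^sup>2)))"
      proof (intro sum.cong refl)
        fix i k assume "i \<in> {..<E}" "k \<in> {..N i}"
        then have ik: "i < E" "k \<le> N i" by auto
        have "(\<Sum>q<M. J q i k * (\<Sum>j\<le>NR. a i j k * (v (UR j) q - v (UL i k) q)))
            = (\<Sum>q<M. J q i k * (D i * w i k * J q i k))"
          by (intro sum.cong refl) (simp only: aLv[OF ik])
        also have "\<dots> = D i * w i k * (\<Sum>q<M. (J q i k)\<^sup>2)"
          by (simp add: sum_distrib_left power2_eq_square mult_ac)
        finally show "- (lam / 2) * (\<Sum>q<M. J q i k * (\<Sum>j\<le>NR. a i j k * (v (UR j) q - v (UL i k) q)))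
            = - (lam / 2) * (D i * w i k * (\<Sum>q<M. (J q i k)\<^sup>2))" by simp
      qed
      also have "\<dots> \<le> 0"
      proof (intro sum_nonpos)
        fix i k assume "i \<in> {..<E}" "k \<in> {..N i}"
        then have ik: "i < E" "k \<le> N i" by auto
        have "D i * w i k \<ge> 0" using D_pos[OF ik(1)] w_pos[OF ik] by simp
        moreover have "(\<Sum>q<M. (J q i k)\<^sup>2) \<ge> 0" by (simp add: sum_nonneg)
        ultimately have "D i * w i k * (\<Sum>q<M. (J q i k)\<^sup>2) \<ge> 0"
          by (rule mult_nonneg_nonneg)
        then show "- (lam / 2) * (D i * w i k * (\<Sum>q<M. (J q i k)\<^sup>2)) \<le> 0"
          using lam_pos by (simp add: mult_nonneg_nonneg)
      qed
      finally show ?thesis .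
    qed
  qed
qed

end
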